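(* Let $X$ and $Y$ be jointly spacelike slices (i.e. $X\cup Y$ is spacelike). Then the presheaf $(X\wedge Y)(-):\mathsf{Slice}^{op}\to\mathsf{Set}$ is representable (namely by the slice $X\cap Y$).
   Context: Fix a connected, time-orientable Lorentzian manifold $\mathcal{M}$ with a fixed time-orientation (no further causality assumptions). A causal curve is an equivalence class, up to monotone reparametrisation, of smooth regular paths $\mu:\iota\to\mathcal{M}$ ($\iota\subseteq\mathbb{R}$ an interval) whose tangent is everywhere timelike or null; it is future-directed if the tangent is everywhere future-directed. Write $x\prec y$ if $x=y$ or there is a future-directed causal curve from $x$ to $y$. A region $A\subseteq\mathcal{M}$ is spacelike if no two distinct points $x,y\in A$ satisfy $x\prec y$. A slice is a closed spacelike subset of $\mathcal{M}$; slices $X,Y$ are jointly spacelike if $X\cup Y$ is spacelike. For regions $A,B$, $\mathcal{C}[A,B]$ is the set of future-directed causal curves passing through $A$ and then $B$: for a representative path $\mu:\iota\to\mathcal{M}$, there exists $q\in\iota$ with $\mu(q)\in B$, and for every such $q$ there exists $p\le q$ with $\mu(p)\in A$. The category $\mathsf{Slice}$ has slices as objects, $\mathsf{Slice}(X,Y)=\mathcal{P}(\mathcal{C}[X,Y])$ (the powerset), composition $T\circ S:=T\cap S$, identities $1_X=\mathcal{C}[X,X]$. For slices $X,Y$, $(X\wedge Y)(-)$ is the presheaf with $(X\wedge Y)(Z):=\mathcal{P}(\mathcal{C}[Z,X]\cap\mathcal{C}[Z,Y])$ and $(X\wedge Y)(U:Z'\to Z):C\mapsto C\cap U$. *)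

theory Defs
  imports "HOL-Analysis.Analysis"
begin

text \<open>
  The manifold is represented by a topological space of points of type 'm, and
  its causal structure by the parameter FD: the set of (representatives of)
  future-directed causal paths, each given as a pair (iota, mu) of a real
  interval iota and a map mu that is only relevant on iota.
\<close>

type_synonym 'm path = "real set \<times> (real \<Rightarrow> 'm)"

definition reparam :: "'m path \<Rightarrow> 'm path \<Rightarrow> bool" where
  "reparam P Q \<longleftrightarrow> (\<exists>f. strict_mono_on (fst Q) f \<and> f ` fst Q = fst P
                          \<and> (\<forall>t\<in>fst Q. snd Q t = snd P (f t)))"

definition curve_class :: "'m path \<Rightarrow> 'm path set" where
  "curve_class P = {Q. reparam P Q}"

definition fd_curves :: "'m path set \<Rightarrow> 'm path set set" where
  "fd_curves FD = {curve_class P | P. P \<in> FD \<and> is_interval (fst P)}"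

definition cprec :: "'m path set \<Rightarrow> 'm \<Rightarrow> 'm \<Rightarrow> bool" where
  "cprec FD x y \<longleftrightarrow> x = y \<or>
     (\<exists>P\<in>FD. is_interval (fst P) \<and>
        (\<exists>p\<in>fst P. \<exists>q\<in>fst P. p \<le> q \<and> snd P p = x \<and> snd P q = y))"

definition spacelike :: "'m path set \<Rightarrow> 'm set \<Rightarrow> bool" where
  "spacelike FD A \<longleftrightarrow> (\<forall>x\<in>A. \<forall>y\<in>A. x \<noteq> y \<longrightarrow> \<not> cprec FD x y)"

definition slice :: "'m path set \<Rightarrow> 'm::topological_space set \<Rightarrow> bool" where
  "slice FD X \<longleftrightarrow> closed X \<and> spacelike FD X"

definition path_through :: "'m set \<Rightarrow> 'm set \<Rightarrow> 'm path \<Rightarrow> bool" where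
  "path_through A B P \<longleftrightarrow>
     (\<exists>q\<in>fst P. snd P q \<in> B) \<and>
     (\<forall>q\<in>fst P. snd P q \<in> B \<longrightarrow> (\<exists>p\<in>fst P. p \<le> q \<and> snd P p \<in> A))"

definition CC :: "'m path set \<Rightarrow> 'm set \<Rightarrow> 'm set \<Rightarrow> 'm path set set" where
  "CC FD A B = {c \<in> fd_curves FD. \<exists>P\<in>c. path_through A B P}"

definition slice_hom :: "'m path set \<Rightarrow> 'm set \<Rightarrow> 'm set \<Rightarrow> 'm path set set set" where
  "slice_hom FD X Y = Pow (CC FD X Y)"

definition slice_comp :: "'m path set set \<Rightarrow> 'm path set set \<Rightarrow> 'm path set set" where
  "slice_comp T S = T \<inter> S"

definition wedge_obj :: "'m path set \<Rightarrow> 'm set \<Rightarrow> 'm set \<Rightarrow> 'm set \<Rightarrow> 'm path set set set" where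
  "wedge_obj FD X Y Z = Pow (CC FD Z X \<inter> CC FD Z Y)"

definition wedge_map :: "'m path set set \<Rightarrow> 'm path set set \<Rightarrow> 'm path set set" where
  "wedge_map U C = C \<inter> U"

definition wedge_represented_by ::
  "'m path set \<Rightarrow> 'm::topological_space set \<Rightarrow> 'm set \<Rightarrow> 'm set \<Rightarrow> bool" where
  "wedge_represented_by FD X Y R \<longleftrightarrow> slice FD R \<and>
     (\<exists>phi. (\<forall>Z. slice FD Z \<longrightarrow> bij_betw (phi Z) (slice_hom FD Z R) (wedge_obj FD X Y Z)) \<and>
            (\<forall>Z Z' U S. slice FD Z \<longrightarrow> slice FD Z' \<longrightarrow> U \<in> slice_hom FD Z' Z \<longrightarrow>
                 S \<in> slice_hom FD Z R \<longrightarrow>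
                 phi Z' (slice_comp S U) = wedge_map U (phi Z S)))"

end

theory Submission
  imports Defs
begin

lemma reparam_through:
  assumes "reparam P Q" "path_through A B Q"
  shows "path_through A B P"
proof -
  obtain f where f: "strict_mono_on (fst Q) f" "f ` fst Q = fst P"
    "\<forall>t\<in>fst Q. snd Q t = snd P (f t)"
    using assms(1) unfolding reparam_def by blast
  from assms(2) obtain q where q: "q \<in> fst Q" "snd Q q \<in> B"
    unfolding path_through_def by blast
  have 1: "\<exists>q\<in>fst P. snd P q \<in> B"
  proof
    show "f q \<in> fst P" using imageI[OF q(1), of f] f(2) by simp
    show "snd P (f q) \<in> B" using q f(3) by simp
  qed
  have 2: "\<exists>p\<in>fst P. p \<le> q' \<and> snd P p \<in> A" if "q' \<in> fst P" "snd P q' \<in> B" for q'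
  proof -
    have "q' \<in> f ` fst Q" using that(1) f(2) by simp
    then obtain t where t: "t \<in> fst Q" "q' = f t" by (elim imageE) simp
    then have "snd Q t \<in> B" using f(3) that by simp
    then obtain s where s: "s \<in> fst Q" "s \<le> t" "snd Q s \<in> A"
      using assms(2) t unfolding path_through_def by blast
    have "f s \<le> f t"
    proof (cases "s = t")
      case False
      then have "s < t" using s by simp
      then show ?thesis using strict_mono_onD[OF f(1) s(1) t(1)] by (simp add: less_imp_le)
    qed simp
    moreover have "f s \<in> fst P" using imageI[OF s(1), of f] f(2) by simp
    moreover have "snd P (f s) \<in> A" using s f(3) by simp
    ultimately show ?thesis unfolding t(2) by blast
  qed
  show ?thesis using 1 2 unfolding path_through_def by blast
qed

lemma CC_char:
  "c \<in> CC FD A B \<longleftrightarrow> (\<exists>P. P \<in> FD \<and> is_interval (fst P) \<and> c = curve_class P \<and> path_through A B P)"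
proof
  assume "c \<in> CC FD A B"
  then obtain P Q where P: "P \<in> FD" "is_interval (fst P)" "c = curve_class P"
    and Q: "Q \<in> c" "path_through A B Q"
    unfolding CC_def fd_curves_def by blast
  have "reparam P Q" using Q P unfolding curve_class_def by simp
  then show "\<exists>P. P \<in> FD \<and> is_interval (fst P) \<and> c = curve_class P \<and> path_through A B P"
    using P Q reparam_through by blast
next
  assume "\<exists>P. P \<in> FD \<and> is_interval (fst P) \<and> c = curve_class P \<and> path_through A B P"
  then obtain P where P: "P \<in> FD" "is_interval (fst P)" "c = curve_class P" "path_through A B P"
    by blast
  have "reparam P P" unfolding reparam_def
    by (rule exI[of _ id]) (auto simp: strict_mono_on_def)
  then have "P \<in> c" using P unfolding curve_class_def by simp
  then show "c \<in> CC FD A B" using P unfolding CC_def fd_curves_def by blast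
qed

lemma CC_I: "P \<in> FD \<Longrightarrow> is_interval (fst P) \<Longrightarrow> c = curve_class P \<Longrightarrow> path_through A B P \<Longrightarrow> c \<in> CC FD A B"
  using CC_char by blast

lemma CC_E: "c \<in> CC FD A B \<Longrightarrow> (\<And>P. P \<in> FD \<Longrightarrow> is_interval (fst P) \<Longrightarrow> c = curve_class P \<Longrightarrow> path_through A B P \<Longrightarrow> thesis) \<Longrightarrow> thesis"
  using CC_char by blast

lemma sl_eq: "spacelike FD A \<Longrightarrow> x \<in> A \<Longrightarrow> y \<in> A \<Longrightarrow> cprec FD x y \<Longrightarrow> x = y"
  unfolding spacelike_def by blast

lemma eq_pts:
  assumes sp: "spacelike FD (X \<union> Y)" and P: "P \<in> FD" "is_interval (fst P)"
    and a: "a \<in> fst P" "b \<in> fst P" "snd P a \<in> X" "snd P b \<in> Y"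
  shows "snd P a = snd P b"
proof (cases "a \<le> b")
  case True
  then have "cprec FD (snd P a) (snd P b)" unfolding cprec_def using P a by blast
  then show ?thesis using sl_eq[OF sp] a(3,4) by (metis UnI1 UnI2)
next
  case False
  then have "b \<le> a" by simp
  then have "cprec FD (snd P b) (snd P a)" unfolding cprec_def using P a by blast
  then show ?thesis using sl_eq[OF sp] a(3,4) by (metis UnI1 UnI2)
qed

lemma CC_inter:
  assumes sp: "spacelike FD (X \<union> Y)"
  shows "CC FD Z (X \<inter> Y) = CC FD Z X \<inter> CC FD Z Y"
proof (intro set_eqI iffI)
  fix c assume "c \<in> CC FD Z (X \<inter> Y)"
  then obtain P where P: "P \<in> FD" "is_interval (fst P)" "c = curve_class P"
     and T: "path_through Z (X \<inter> Y) P" by (rule CC_E)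
  obtain q0 where q0: "q0 \<in> fst P" "snd P q0 \<in> X \<inter> Y" using T unfolding path_through_def by blast
  have "path_through Z X P"
    unfolding path_through_def
  proof (intro conjI ballI impI)
    show "\<exists>q\<in>fst P. snd P q \<in> X" using q0 by blast
    fix q assume q: "q \<in> fst P" "snd P q \<in> X"
    then have "snd P q = snd P q0" using eq_pts[OF sp P(1,2) q(1) q0(1)] q0 by blast
    then have "snd P q \<in> X \<inter> Y" using q0 by simp
    then show "\<exists>p\<in>fst P. p \<le> q \<and> snd P p \<in> Z" using T q unfolding path_through_def by blast
  qed
  moreover have "path_through Z Y P"
    unfolding path_through_def
  proof (intro conjI ballI impI)
    show "\<exists>q\<in>fst P. snd P q \<in> Y" using q0 by blast
    fix q assume q: "q \<in> fst P" "snd P q \<in> Y"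
    then have "snd P q0 = snd P q" using eq_pts[OF sp P(1,2) q0(1) q(1)] q0 by blast
    then have "snd P q \<in> X \<inter> Y" using q0 by simp
    then show "\<exists>p\<in>fst P. p \<le> q \<and> snd P p \<in> Z" using T q unfolding path_through_def by blast
  qed
  ultimately show "c \<in> CC FD Z X \<inter> CC FD Z Y" using CC_I[OF P(1,2,3)] by blast
next
  fix c assume "c \<in> CC FD Z X \<inter> CC FD Z Y"
  then obtain P where P: "P \<in> FD" "is_interval (fst P)" "c = curve_class P"
     and T: "path_through Z X P" by (auto elim: CC_E)
  obtain P' where P': "P' \<in> FD" "is_interval (fst P')" "c = curve_class P'"
     and T': "path_through Z Y P'" using \<open>c \<in> _\<close> by (auto elim: CC_E)
  have "reparam P' P'" unfolding reparam_def
    by (rule exI[of _ id]) (auto simp: strict_mono_on_def)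
  then have "P' \<in> curve_class P'" unfolding curve_class_def by simp
  then have "P' \<in> curve_class P" using P(3) P'(3) by simp
  then have "reparam P P'" unfolding curve_class_def by simp
  then have TY: "path_through Z Y P" using reparam_through T' by blast
  obtain q0 where q0: "q0 \<in> fst P" "snd P q0 \<in> X" using T unfolding path_through_def by blast
  obtain q1 where q1: "q1 \<in> fst P" "snd P q1 \<in> Y" using TY unfolding path_through_def by blast
  have "snd P q0 = snd P q1" using eq_pts[OF sp P(1,2) q0(1) q1(1)] q0 q1 by blast
  then have "path_through Z (X \<inter> Y) P" unfolding path_through_def
  proof (intro conjI ballI impI)
    show "\<exists>q\<in>fst P. snd P q \<in> X \<inter> Y" using q0 q1 \<open>snd P q0 = snd P q1\<close> by auto
    fix q assume "q \<in> fst P" "snd P q \<in> X \<inter> Y"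
    then show "\<exists>p\<in>fst P. p \<le> q \<and> snd P p \<in> Z" using T unfolding path_through_def by blast
  qed
  then show "c \<in> CC FD Z (X \<inter> Y)" by (rule CC_I[OF P(1,2,3)])
qed

theorem mainTheorem8:
  fixes FD :: "('m::topological_space) path set"
    and X Y :: "'m set"
  assumes "slice FD X" and "slice FD Y" and "spacelike FD (X \<union> Y)"
  shows "wedge_represented_by FD X Y (X \<inter> Y)"
proof -
  have sl: "slice FD (X \<inter> Y)" using assms unfolding slice_def spacelike_def by (simp add: closed_Int)
  show ?thesis unfolding wedge_represented_by_def
  proof (intro conjI exI[of _ "\<lambda>Z. id"] allI impI)
    show "slice FD (X \<inter> Y)" by (rule sl)
    fix Z assume "slice FD Z"
    show "bij_betw id (slice_hom FD Z (X \<inter> Y)) (wedge_obj FD X Y Z)"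
      unfolding slice_hom_def wedge_obj_def CC_inter[OF assms(3)] by simp
  next
    fix Z Z' U S
    show "id (slice_comp S U) = wedge_map U (id S)"
      by (simp add: slice_comp_def wedge_map_def)
  qed
qed

end
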